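(* For every Hamming graph $H(d,q)$, the VC-dimension of the edge relation on $H(d,q)$ is at most $3$.
   Context: For $d,q\in\mathbb N$ and a set $S$ with $|S|=q$, the Hamming graph $H(d,q)$ has vertex set $S^d$, two vertices adjacent iff they agree in all but exactly one coordinate. The VC-dimension of the edge relation on a graph $G$ is the largest size of a set $A\subseteq V(G)$ such that $\{A\cap N(v)\mid v\in V(G)\}$ equals the power set of $A$, where $N(v)$ is the set of vertices adjacent to $v$. *)

theory Defs
  imports "HOL-Library.FuncSet"
begin

text \<open>Hamming graph H(d,q) over alphabet S (card S = q): vertices are the maps
  {0..<d} -> S (extensional), adjacent iff they differ in exactly one coordinate.\<close>

definition hamming_vertices :: "nat \<Rightarrow> 'a set \<Rightarrow> (nat \<Rightarrow> 'a) set" where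
  "hamming_vertices d S = PiE {..<d} (\<lambda>_. S)"

definition hamming_adj :: "nat \<Rightarrow> (nat \<Rightarrow> 'a) \<Rightarrow> (nat \<Rightarrow> 'a) \<Rightarrow> bool" where
  "hamming_adj d x y \<longleftrightarrow> card {i \<in> {..<d}. x i \<noteq> y i} = 1"

definition nbhd :: "'v set \<Rightarrow> ('v \<Rightarrow> 'v \<Rightarrow> bool) \<Rightarrow> 'v \<Rightarrow> 'v set" where
  "nbhd V adj v = {u \<in> V. adj v u}"

definition edge_shattered :: "'v set \<Rightarrow> ('v \<Rightarrow> 'v \<Rightarrow> bool) \<Rightarrow> 'v set \<Rightarrow> bool" where
  "edge_shattered V adj A \<longleftrightarrow> A \<subseteq> V \<and> (\<lambda>v. A \<inter> nbhd V adj v) ` V = Pow A"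

end

theory Submission
  imports Defs
begin

definition adj1 :: "nat \<Rightarrow> (nat \<Rightarrow> 'a) \<Rightarrow> (nat \<Rightarrow> 'a) \<Rightarrow> bool" where
  "adj1 d x y \<longleftrightarrow> (\<exists>i<d. x i \<noteq> y i \<and> (\<forall>j<d. j \<noteq> i \<longrightarrow> x j = y j))"

lemma adj_iff: "hamming_adj d x y \<longleftrightarrow> adj1 d x y"
proof
  assume "hamming_adj d x y"
  then obtain i where i: "{i \<in> {..<d}. x i \<noteq> y i} = {i}"
    unfolding hamming_adj_def by (auto simp: card_1_singleton_iff)
  then show "adj1 d x y" unfolding adj1_def by (rule_tac x=i in exI) blast
next
  assume "adj1 d x y"
  then obtain i where "i<d" "x i \<noteq> y i" "\<forall>j<d. j \<noteq> i \<longrightarrow> x j = y j"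
    unfolding adj1_def by blast
  then have "{i \<in> {..<d}. x i \<noteq> y i} = {i}" by auto
  then show "hamming_adj d x y" unfolding hamming_adj_def by simp
qed

lemma two_coord:
  assumes "i<d" "l<d" "i\<noteq>l" "a i \<noteq> v i" "\<forall>j<d. j \<noteq> i \<longrightarrow> a j = v j"
    "e l \<noteq> v l" "\<forall>j<d. j \<noteq> l \<longrightarrow> e j = v j" "adj1 d x a" "adj1 d x e"
  shows "(\<forall>j<d. x j = v j) \<or> (\<forall>j<d. x j = (if j = i then a i else if j = l then e l else v j))"
proof -
  obtain m where m: "m<d" "x m \<noteq> a m" "\<forall>j<d. j \<noteq> m \<longrightarrow> x j = a j"
    using assms(8) unfolding adj1_def by blast
  obtain n where n: "n<d" "x n \<noteq> e n" "\<forall>j<d. j \<noteq> n \<longrightarrow> x j = e j"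
    using assms(9) unfolding adj1_def by blast
  have "m = i \<or> m = l"
  proof (rule ccontr)
    assume "\<not> (m = i \<or> m = l)"
    then have "x i = a i" "x l = a l" using m assms(1,2) by auto
    then have "x i \<noteq> e i" "x l \<noteq> e l" using assms by auto
    then have "n = i" "n = l" using n assms(1,2) by (metis, metis)
    then show False using assms(3) by simp
  qed
  then show ?thesis
  proof
    assume "m = i"
    then have "x l = v l" using m assms by auto
    then have "n = l" using n assms by metis
    then have "x i = v i" using n assms by auto
    then have "\<forall>j<d. x j = v j" using m \<open>m = i\<close> assms by auto
    then show ?thesis by blast
  next
    assume "m = l"
    then have "x i = a i" using m assms by auto
    then have "n = i" using n assms by metis
    then have "x l = e l" using n assms by auto
    then show ?thesis using m \<open>m = l\<close> assms by auto
  qed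
qed

lemma one_coord:
  assumes "i<d" "a i \<noteq> b i" "\<forall>j<d. j \<noteq> i \<longrightarrow> a j = v j"
    "\<forall>j<d. j \<noteq> i \<longrightarrow> b j = v j" "adj1 d x a" "adj1 d x b"
  shows "\<forall>j<d. j \<noteq> i \<longrightarrow> x j = v j"
proof -
  obtain m where m: "m<d" "x m \<noteq> a m" "\<forall>j<d. j \<noteq> m \<longrightarrow> x j = a j"
    using assms(5) unfolding adj1_def by blast
  obtain n where n: "n<d" "x n \<noteq> b n" "\<forall>j<d. j \<noteq> n \<longrightarrow> x j = b j"
    using assms(6) unfolding adj1_def by blast
  have "m = i"
  proof (rule ccontr)
    assume "m \<noteq> i"
    then have "x i = a i" using m assms by auto
    then have "n = i" using n assms by metis
    then have "x m = b m" using n m(1) \<open>m \<noteq> i\<close> by auto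
    then show False using m assms(3,4) \<open>m \<noteq> i\<close> by auto
  qed
  then show ?thesis using m assms by auto
qed

theorem mainTheorem16:
  fixes S :: "'a set" and d q :: nat and A :: "(nat \<Rightarrow> 'a) set"
  assumes "finite S" and "card S = q"
    and "edge_shattered (hamming_vertices d S) (hamming_adj d) A"
  shows "finite A \<and> card A \<le> 3"
proof -
  define V where "V = hamming_vertices d S"
  have finV: "finite V" unfolding V_def hamming_vertices_def
    using assms(1) by (simp add: finite_PiE)
  have AV: "A \<subseteq> V" and img: "(\<lambda>v. A \<inter> nbhd V (hamming_adj d) v) ` V = Pow A"
    using assms(3) unfolding edge_shattered_def V_def by auto
  have finA: "finite A" using AV finV finite_subset by blast
  have ext: "x = y" if "x \<in> V" "y \<in> V" "\<forall>j<d. x j = y j" for x y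
    using that unfolding V_def hamming_vertices_def by (intro PiE_ext) auto
  have real: "\<exists>x\<in>V. \<forall>a\<in>A. (adj1 d x a \<longleftrightarrow> a \<in> B)" if "B \<subseteq> A" for B
  proof -
    have "B \<in> (\<lambda>v. A \<inter> nbhd V (hamming_adj d) v) ` V" using img that by auto
    then obtain x where "x \<in> V" "B = A \<inter> nbhd V (hamming_adj d) x" by auto
    then show ?thesis using AV by (auto simp: nbhd_def adj_iff)
  qed
  have "card A \<le> 3"
  proof (rule ccontr)
    assume "\<not> card A \<le> 3"
    then have c4: "card A \<ge> 4" by simp
    obtain v where v: "v \<in> V" "\<forall>a\<in>A. adj1 d v a" using real[of A] by auto
    have "\<forall>a\<in>A. \<exists>i. i<d \<and> a i \<noteq> v i \<and> (\<forall>j<d. j \<noteq> i \<longrightarrow> a j = v j)"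
    proof
      fix a assume "a \<in> A"
      then obtain i where "i<d" "v i \<noteq> a i" "\<forall>j<d. j \<noteq> i \<longrightarrow> v j = a j"
        using v(2) unfolding adj1_def by blast
      then show "\<exists>i. i<d \<and> a i \<noteq> v i \<and> (\<forall>j<d. j \<noteq> i \<longrightarrow> a j = v j)"
        by (intro exI[of _ i]) auto
    qed
    from bchoice[OF this] obtain \<iota> where io': "\<forall>a\<in>A. \<iota> a < d \<and> a (\<iota> a) \<noteq> v (\<iota> a) \<and> (\<forall>j<d. j \<noteq> \<iota> a \<longrightarrow> a j = v j)"
      by blast
    have io: "\<iota> a < d \<and> a (\<iota> a) \<noteq> v (\<iota> a) \<and> (\<forall>j<d. j \<noteq> \<iota> a \<longrightarrow> a j = v j)" if "a \<in> A" for a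
      using io' that by blast
    show False
    proof (cases "\<exists>a\<in>A. \<exists>e\<in>A. \<iota> a \<noteq> \<iota> e")
      case True
      then obtain a e where ae: "a \<in> A" "e \<in> A" "\<iota> a \<noteq> \<iota> e" by blast
      have "a \<noteq> e" using ae by auto
      have "A \<noteq> {a,e}"
      proof
        assume "A = {a,e}"
        then have "card A \<le> 2" by (simp add: card_insert_le_m1)
        then show False using c4 by simp
      qed
      then obtain b where b: "b \<in> A" "b \<notin> {a,e}" using ae by blast
      obtain x where x: "x \<in> V" "\<forall>c\<in>A. adj1 d x c \<longleftrightarrow> c \<in> {a,e}" using real[of "{a,e}"] ae by auto
      obtain y where y: "y \<in> V" "\<forall>c\<in>A. adj1 d y c \<longleftrightarrow> c \<in> {a,e,b}" using real[of "{a,e,b}"] ae b by auto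
      have xv: "x \<noteq> v" using x v b by auto
      have yv: "y \<noteq> v"
      proof
        assume "y = v"
        then have "A \<subseteq> {a,e,b}" using y v by auto
        then have "card A \<le> card {a,e,b}" by (intro card_mono) auto
        also have "\<dots> \<le> 3" by (simp add: card_insert_le_m1)
        finally show False using c4 by simp
      qed
      have xy: "x \<noteq> y" using x y b by auto
      let ?i = "\<iota> a" and ?l = "\<iota> e"
      have hx: "(\<forall>j<d. x j = v j) \<or> (\<forall>j<d. x j = (if j = ?i then a ?i else if j = ?l then e ?l else v j))"
      proof -
        have "adj1 d x a" "adj1 d x e" using x(2) ae by auto
        then show ?thesis using two_coord[of ?i d ?l a v e x] io[OF ae(1)] io[OF ae(2)] ae(3) by blast
      qed
      have hy: "(\<forall>j<d. y j = v j) \<or> (\<forall>j<d. y j = (if j = ?i then a ?i else if j = ?l then e ?l else v j))"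
      proof -
        have "adj1 d y a" "adj1 d y e" using y(2) ae by auto
        then show ?thesis using two_coord[of ?i d ?l a v e y] io[OF ae(1)] io[OF ae(2)] ae(3) by blast
      qed
      have hx': "\<forall>j<d. x j = (if j = ?i then a ?i else if j = ?l then e ?l else v j)"
        using hx ext[of x v] x(1) v(1) xv by auto
      have hy': "\<forall>j<d. y j = (if j = ?i then a ?i else if j = ?l then e ?l else v j)"
        using hy ext[of y v] y(1) v(1) yv by auto
      have "\<forall>j<d. x j = y j" using hx' hy' by simp
      then show False using ext[of x y] x(1) y(1) xy by auto
    next
      case False
      then have same: "\<forall>a\<in>A. \<forall>e\<in>A. \<iota> a = \<iota> e" by blast
      have "A \<noteq> {}" using c4 by auto
      then obtain a where a: "a \<in> A" by blast
      have "A \<noteq> {a}"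
      proof
        assume "A = {a}"
        then show False using c4 by simp
      qed
      then have "\<exists>b\<in>A. b \<noteq> a" using a by auto
      then obtain b where b: "b \<in> A" "b \<noteq> a" by blast
      let ?i = "\<iota> a"
      have bi: "\<iota> b = ?i" using same a b(1) by blast
      have abi: "a ?i \<noteq> b ?i"
      proof
        assume "a ?i = b ?i"
        have "\<forall>j<d. a j = b j"
        proof (intro allI impI)
          fix j assume "j < d"
          then show "a j = b j" using io[OF a] io[OF b(1)] bi \<open>a ?i = b ?i\<close> by (cases "j = ?i") auto
        qed
        then show False using ext[of a b] AV a b by auto
      qed
      obtain x where x: "x \<in> V" "\<forall>c\<in>A. adj1 d x c \<longleftrightarrow> c \<in> {a,b}" using real[of "{a,b}"] a b by auto
      have xo: "\<forall>j<d. j \<noteq> ?i \<longrightarrow> x j = v j"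
      proof -
        have "adj1 d x a" "adj1 d x b" using x(2) a b(1) by auto
        then show ?thesis using one_coord[of ?i d a b v x] io[OF a] io[OF b(1)] bi abi by auto
      qed
      have "A - {x} \<subseteq> {a,b}"
      proof
        fix c assume c: "c \<in> A - {x}"
        have ci: "\<iota> c = ?i" using same a c by blast
        have "c ?i \<noteq> x ?i"
        proof
          assume "c ?i = x ?i"
          have "\<forall>j<d. c j = x j"
          proof (intro allI impI)
            fix j assume "j < d"
            then show "c j = x j" using io[of c] c ci xo \<open>c ?i = x ?i\<close> by (cases "j = ?i") auto
          qed
          then show False using ext[of c x] AV c x(1) by auto
        qed
        then have "adj1 d x c" unfolding adj1_def using io[of c] c ci xo by (intro exI[of _ ?i]) auto
        then show "c \<in> {a,b}" using x c by auto
      qed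
      then have "card (A - {x}) \<le> card {a,b}" by (intro card_mono) auto
      also have "\<dots> \<le> 2" by (simp add: card_insert_le_m1)
      finally have "card (A - {x}) \<le> 2" .
      moreover have "card (A - {x}) \<ge> 3" using c4 finA by (cases "x \<in> A") auto
      ultimately show False by simp
    qed
  qed
  then show ?thesis using finA by simp
qed

end
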